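(* Let $n\ge 1$, let $f$ be the standard Gaussian density on $\mathbb{R}^n$, and let $\phi:\mathbb{R}^n\to\mathbb{R}_+$ be a non-negative measurable function with $E=\int \phi(\mathbf{x})f(\mathbf{x})\,\mathrm{d}\mathbf{x}\in(0,\infty)$. Let $g^*=\phi f/E$, and let $\mathbf{m}^*=\mathbb{E}_{g^*}(\mathbf{X})$ and $\Sigma^*=\mathrm{Var}_{g^*}(\mathbf{X})$ be the mean and covariance matrix of $g^*$ (assumed to exist, with $\Sigma^*$ symmetric positive definite). Let $(\lambda^*_i,\mathbf{d}^*_i)$, $i=1,\dots,n$, be eigenpairs of $\Sigma^*$ (i.e. $\Sigma^*\mathbf{d}^*_i=\lambda^*_i\mathbf{d}^*_i$, with $\mathbf{d}^*_1,\dots,\mathbf{d}^*_n$ an orthonormal basis of $\mathbb{R}^n$) ranked in increasing $\ell$-order, i.e. $\ell(\lambda^*_1)\le \cdots\le \ell(\lambda^*_n)$, where $\ell(x)=\log(x)-x+1$ for $x>0$. Then for every $1\le k\le n$, the solution $\Sigma^*_k$ of the minimization problem $$\Sigma^*_k=\arg\min\{D(g^*,g_{\mathbf{m}^*,\Sigma}) : \Sigma\in\mathcal{L}_{n,k}\}$$ is given by $$\Sigma^*_k=I_n+\sum_{i=1}^k(\lambda^*_i-1)\,\mathbf{d}^*_i(\mathbf{d}^*_i)^\top .$$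
   Context: For $\mathbf{m}\in\mathbb{R}^n$ and $\Sigma$ a symmetric positive definite $n\times n$ matrix, $g_{\mathbf{m},\Sigma}$ denotes the Gaussian density on $\mathbb{R}^n$ with mean $\mathbf{m}$ and covariance $\Sigma$. For densities $p,h$ with $p$ absolutely continuous with respect to $h$, the Kullback--Leibler divergence is $D(p,h)=\int \log\big(p(\mathbf{x})/h(\mathbf{x})\big)p(\mathbf{x})\,\mathrm{d}\mathbf{x}$. The set $\mathcal{L}_{n,k}$ is $$\mathcal{L}_{n,k}=\Big\{\sum_{i=1}^k(\alpha_i-1)\frac{\mathbf{d}_i\mathbf{d}_i^\top}{\|\mathbf{d}_i\|^2}+I_n : \alpha_1,\dots,\alpha_k>0,\ \mathbf{d}_1,\dots,\mathbf{d}_k\in\mathbb{R}^n\setminus\{0\}\text{ pairwise orthogonal}\Big\},$$ where $I_n$ is the $n\times n$ identity matrix. *)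

theory Defs
  imports "HOL-Analysis.Analysis"
begin

definition outer :: "real^'n \<Rightarrow> real^'n \<Rightarrow> real^'n^'n" where
  "outer u v = (\<chi> i j. u $ i * v $ j)"

definition sym_pos_def :: "real^'n^'n \<Rightarrow> bool" where
  "sym_pos_def S \<longleftrightarrow> transpose S = S \<and> (\<forall>x. x \<noteq> 0 \<longrightarrow> x \<bullet> (S *v x) > 0)"

definition gauss_dens :: "real^'n \<Rightarrow> real^'n^'n \<Rightarrow> real^'n \<Rightarrow> real" where
  "gauss_dens m S x =
     exp (- (1/2) * ((x - m) \<bullet> (matrix_inv S *v (x - m))))
     / sqrt ((2 * pi) ^ CARD('n) * det S)"

text \<open>Kullback--Leibler divergence D(p,h) = int log(p/h) p, with values in [0,\<infinity>]
  (the negative part of the integrand is always integrable for densities, so the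
  integral is +\<infinity> exactly when the integrand is not integrable).\<close>
definition KL :: "(real^'n \<Rightarrow> real) \<Rightarrow> (real^'n \<Rightarrow> real) \<Rightarrow> ereal" where
  "KL p h = (if integrable lborel (\<lambda>x. p x * ln (p x / h x))
             then ereal (\<integral>x. p x * ln (p x / h x) \<partial>lborel) else \<infinity>)"

definition Lnk :: "nat \<Rightarrow> (real^'n^'n) set" where
  "Lnk k = {mat 1 + (\<Sum>i\<in>{1..k}. ((\<alpha> i - 1) / (norm (d i))\<^sup>2) *\<^sub>R outer (d i) (d i)) | \<alpha> d.
             (\<forall>i\<in>{1..k}. \<alpha> i > 0 \<and> d i \<noteq> 0) \<and>
             (\<forall>i\<in>{1..k}. \<forall>j\<in>{1..k}. i \<noteq> j \<longrightarrow> d i \<bullet> d j = 0)}"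

definition ell :: "real \<Rightarrow> real" where
  "ell x = ln x - x + 1"

end

theory Submission
  imports Defs
begin


lemma dim_cart: "DIM(real^'n) = CARD('n)" by simp

lemma outer_mv: "outer u v *v x = (v \<bullet> x) *\<^sub>R (u::real^'n)"
  by (simp add: outer_def matrix_vector_mult_def vec_eq_iff inner_vec_def sum_distrib_left mult_ac)

lemma sum_mv: "(\<Sum>i\<in>I. A i) *v (x::real^'n) = (\<Sum>i\<in>I. A i *v x)"
  by (induction I rule: infinite_finite_induct) (auto simp: matrix_vector_mult_add_rdistrib)

lemma scale_mv: "(c *\<^sub>R A) *v (x::real^'n) = c *\<^sub>R (A *v x)"
  by (simp add: scaleR_matrix_vector_assoc)

definition orthon :: "nat set \<Rightarrow> (nat \<Rightarrow> real^'n) \<Rightarrow> bool" where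
  "orthon I u \<longleftrightarrow> (\<forall>i\<in>I. \<forall>j\<in>I. u i \<bullet> u j = (if i = j then 1 else 0))"

definition Mof :: "nat set \<Rightarrow> (nat \<Rightarrow> real) \<Rightarrow> (nat \<Rightarrow> real^'n) \<Rightarrow> real^'n^'n" where
  "Mof I a u = mat 1 + (\<Sum>i\<in>I. a i *\<^sub>R outer (u i) (u i))"

lemma Mof_mv: "Mof I a u *v x = x + (\<Sum>i\<in>I. (a i * (u i \<bullet> x)) *\<^sub>R u i)"
  by (simp add: Mof_def matrix_vector_mult_add_rdistrib sum_mv scale_mv outer_mv)

lemma inner_Mof: 
  assumes "finite I" "orthon I u" "j \<in> I"
  shows "u j \<bullet> (Mof I a u *v x) = (1 + a j) * (u j \<bullet> x)"
proof -
  have "u j \<bullet> (Mof I a u *v x) = u j \<bullet> x + (\<Sum>i\<in>I. (a i * (u i \<bullet> x)) * (u j \<bullet> u i))"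
    by (simp add: Mof_mv inner_add_right inner_sum_right)
  also have "(\<Sum>i\<in>I. (a i * (u i \<bullet> x)) * (u j \<bullet> u i)) = (\<Sum>i\<in>I. if i = j then a j * (u j \<bullet> x) else 0)"
    using assms by (intro sum.cong) (auto simp: orthon_def)
  also have "\<dots> = a j * (u j \<bullet> x)" using assms by simp
  finally show ?thesis by (simp add: algebra_simps)
qed

lemma Mof_mult:
  assumes "finite I" "orthon I u"
  shows "Mof I a u ** Mof I b u = Mof I (\<lambda>i. a i + b i + a i * b i) u"
proof -
  have "Mof I a u *v (Mof I b u *v x) = Mof I (\<lambda>i. a i + b i + a i * b i) u *v x" for x
  proof -
    have "Mof I a u *v (Mof I b u *v x) = Mof I b u *v x + (\<Sum>i\<in>I. (a i * ((1 + b i) * (u i \<bullet> x))) *\<^sub>R u i)"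
      using assms by (simp add: Mof_mv[of I a u] inner_Mof cong: sum.cong)
    also have "\<dots> = x + (\<Sum>i\<in>I. (b i * (u i \<bullet> x)) *\<^sub>R u i + (a i * ((1 + b i) * (u i \<bullet> x))) *\<^sub>R u i)"
      by (simp add: Mof_mv sum.distrib)
    also have "\<dots> = Mof I (\<lambda>i. a i + b i + a i * b i) u *v x"
    proof -
      have "(b i * (u i \<bullet> x)) *\<^sub>R u i + (a i * ((1 + b i) * (u i \<bullet> x))) *\<^sub>R u i
          = ((a i + b i + a i * b i) * (u i \<bullet> x)) *\<^sub>R u i" for i
      proof -
        have "(b i * (u i \<bullet> x)) + (a i * ((1 + b i) * (u i \<bullet> x))) = (a i + b i + a i * b i) * (u i \<bullet> x)"
          by (simp add: algebra_simps)
        then show ?thesis by (metis scaleR_add_left)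
      qed
      then show ?thesis by (simp add: Mof_mv)
    qed
    finally show ?thesis .
  qed
  then show ?thesis by (simp add: matrix_eq matrix_vector_mul_assoc)
qed

lemma Mof_zero: "(\<forall>i\<in>I. a i = 0) \<Longrightarrow> Mof I a u = mat 1"
  by (simp add: Mof_def)

lemma Mof_cong: "(\<And>i. i \<in> I \<Longrightarrow> a i = b i) \<Longrightarrow> Mof I a u = Mof I b u"
  by (simp add: Mof_def)

lemma Mof_inv:
  assumes "finite I" "orthon I u" "\<forall>i\<in>I. \<alpha> i > 0"
  shows "invertible (Mof I (\<lambda>i. \<alpha> i - 1) u)"
    "matrix_inv (Mof I (\<lambda>i. \<alpha> i - 1) u) = Mof I (\<lambda>i. 1 / \<alpha> i - 1) u"
proof -
  let ?A = "Mof I (\<lambda>i. \<alpha> i - 1) u" and ?B = "Mof I (\<lambda>i. 1 / \<alpha> i - 1) u"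
  have z: "\<forall>i\<in>I. (\<alpha> i - 1) + (1 / \<alpha> i - 1) + (\<alpha> i - 1) * (1 / \<alpha> i - 1) = 0"
          "\<forall>i\<in>I. (1 / \<alpha> i - 1) + (\<alpha> i - 1) + (1 / \<alpha> i - 1) * (\<alpha> i - 1) = 0"
    using assms(3) by (auto simp: field_simps)
  have AB: "?A ** ?B = mat 1"
    unfolding Mof_mult[OF assms(1,2)] by (rule Mof_zero) (use z in simp)
  have BA: "?B ** ?A = mat 1"
    unfolding Mof_mult[OF assms(1,2)] by (rule Mof_zero) (use z in simp)
  show inv: "invertible ?A" using AB BA unfolding invertible_def by blast
  have "?A ** matrix_inv ?A = mat 1 \<and> matrix_inv ?A ** ?A = mat 1"
    unfolding matrix_inv_def by (rule someI_ex) (use inv in \<open>simp add: invertible_def\<close>)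
  then have "matrix_inv ?A = matrix_inv ?A ** (?A ** ?B)" using AB by (simp add: matrix_mul_rid)
  also have "\<dots> = ?B"
    using \<open>?A ** matrix_inv ?A = mat 1 \<and> matrix_inv ?A ** ?A = mat 1\<close>
    by (simp add: matrix_mul_assoc matrix_mul_lid)
  finally show "matrix_inv ?A = ?B" .
qed



lemma det_rank1_axis: "det (mat 1 + c *\<^sub>R outer (axis k 1) (axis k (1::real)) :: real^'n^'n) = 1 + c"
proof -
  let ?D = "mat 1 + c *\<^sub>R outer (axis k 1) (axis k (1::real)) :: real^'n^'n"
  have "det ?D = (\<Prod>i\<in>UNIV. ?D $ i $ i)"
    by (rule det_diagonal) (auto simp: mat_def outer_def axis_def)
  also have "\<dots> = (\<Prod>i\<in>UNIV. if i = k then 1 + c else 1)"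
    by (intro prod.cong) (auto simp: mat_def outer_def axis_def)
  also have "\<dots> = 1 + c" by simp
  finally show ?thesis .
qed

lemma det_rank1:
  fixes u :: "real^'n"
  assumes u: "u \<bullet> u = 1"
  shows "det (mat 1 + c *\<^sub>R outer u u) = 1 + c"
proof -
  define e :: "real^'n" where "e = axis undefined 1"
  have ee: "e \<bullet> e = 1" by (simp add: e_def)
  define D where "D = mat 1 + c *\<^sub>R outer e e"
  have detD: "det D = 1 + c" unfolding D_def e_def by (rule det_rank1_axis)
  show ?thesis
  proof (cases "u = e")
    case True then show ?thesis using detD D_def by simp
  next
    case False
    define w where "w = e - u"
    have "w \<noteq> 0" using False by (simp add: w_def)
    then have ww: "w \<bullet> w > 0" by simp
    have ww2: "w \<bullet> w = 2 - 2 * (e \<bullet> u)" using u ee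
      by (simp add: w_def inner_diff_left inner_diff_right inner_commute)
    have we: "w \<bullet> e = 1 - e \<bullet> u" using ee by (simp add: w_def inner_diff_left inner_diff_right inner_commute)
    define t where "t = 2 / (w \<bullet> w)"
    have twe: "t * (w \<bullet> e) = 1" using ww ww2 we \<open>w \<noteq> 0\<close> by (simp add: t_def field_simps)
    have tww: "t * (w \<bullet> w) = 2" using ww by (simp add: t_def)
    define H where "H = mat 1 - t *\<^sub>R outer w w"
    have Hx: "H *v x = x - (t * (w \<bullet> x)) *\<^sub>R w" for x
      by (simp add: H_def matrix_vector_mult_diff_rdistrib scale_mv outer_mv)
    have wHx: "w \<bullet> (H *v x) = - (w \<bullet> x)" for x
    proof -
      have "w \<bullet> (H *v x) = w \<bullet> x - t * (w \<bullet> x) * (w \<bullet> w)"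
        by (simp add: Hx inner_diff_right)
      also have "\<dots> = w \<bullet> x - (w \<bullet> x) * (t * (w \<bullet> w))" by (simp add: algebra_simps)
      finally show ?thesis using tww by simp
    qed
    have HH: "H *v (H *v x) = x" for x
      by (simp add: Hx[of "H *v x"] wHx) (simp add: Hx)
    have He: "H *v e = u"
      using twe by (simp add: Hx) (simp add: w_def)
    have eHx: "e \<bullet> (H *v x) = u \<bullet> x" for x
    proof -
      have "e \<bullet> (H *v x) = e \<bullet> x - (t * (w \<bullet> e)) * (w \<bullet> x)"
        by (simp add: Hx inner_diff_right algebra_simps inner_commute[of e w])
      also have "\<dots> = e \<bullet> x - w \<bullet> x" using twe by simp
      also have "\<dots> = u \<bullet> x" by (simp add: w_def inner_diff_left)
      finally show ?thesis .
    qed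
    have Dy: "D *v y = y + (c * (e \<bullet> y)) *\<^sub>R e" for y
      by (simp add: D_def matrix_vector_mult_add_rdistrib scale_mv outer_mv)
    have "H ** D ** H = mat 1 + c *\<^sub>R outer u u"
    proof -
      have "(H ** D ** H) *v x = (mat 1 + c *\<^sub>R outer u u) *v x" for x
      proof -
        have "(H ** D ** H) *v x = H *v (D *v (H *v x))"
          by (simp add: matrix_vector_mul_assoc matrix_mul_assoc)
        also have "\<dots> = H *v (H *v x) + (c * (u \<bullet> x)) *\<^sub>R (H *v e)"
          by (simp add: Dy eHx matrix_vector_right_distrib matrix_vector_mult_scaleR)
        also have "\<dots> = x + (c * (u \<bullet> x)) *\<^sub>R u" by (simp add: HH He)
        finally show ?thesis
          by (simp add: matrix_vector_mult_add_rdistrib scale_mv outer_mv)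
      qed
      then show ?thesis by (simp add: matrix_eq)
    qed
    moreover have "H ** H = mat 1"
      by (simp add: matrix_eq HH flip: matrix_vector_mul_assoc)
    ultimately have "det (mat 1 + c *\<^sub>R outer u u) = det (H ** H) * det D"
      by (metis det_mul mult.commute mult.left_commute)
    then show ?thesis using \<open>H ** H = mat 1\<close> detD by simp
  qed
qed

lemma orthon_subset: "orthon J u \<Longrightarrow> I \<subseteq> J \<Longrightarrow> orthon I u"
  unfolding orthon_def by (metis subsetD)

lemma det_Mof:
  assumes "finite I" "orthon I u"
  shows "det (Mof I a u) = (\<Prod>i\<in>I. 1 + a i)"
  using assms
proof (induction I rule: finite_induct)
  case empty
  then show ?case by (simp add: Mof_def)
next
  case (insert j I)
  let ?J = "insert j I"
  define a' where "a' = a(j := 0)"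
  define b' where "b' = (\<lambda>i. if i = j then a j else 0)"
  have fin: "finite ?J" using insert by simp
  have "Mof ?J a u = Mof ?J (\<lambda>i. a' i + b' i + a' i * b' i) u"
    by (rule Mof_cong) (auto simp: a'_def b'_def)
  also have "\<dots> = Mof ?J a' u ** Mof ?J b' u"
    by (rule Mof_mult[OF fin insert(4), symmetric])
  also have "Mof ?J a' u = Mof I a u"
    using insert(1,2) unfolding Mof_def a'_def
    by (simp add: sum.insert) (intro sum.cong, auto)
  also have "Mof ?J b' u = mat 1 + a j *\<^sub>R outer (u j) (u j)"
    using insert(1,2) unfolding Mof_def b'_def
    by (simp add: sum.insert) (intro sum.neutral, auto)
  finally have "det (Mof ?J a u) = det (Mof I a u) * (1 + a j)"
    using det_rank1[of "u j" "a j"] insert(4) by (simp add: det_mul orthon_def)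
  then show ?case using insert orthon_subset[OF insert(4), of I] by auto
qed



definition tr2 :: "real^'n^'n \<Rightarrow> real^'n^'n \<Rightarrow> real" where
  "tr2 S A = (\<Sum>a\<in>UNIV. \<Sum>b\<in>UNIV. A $ a $ b * S $ a $ b)"

lemma tr2_add: "tr2 S (A + B) = tr2 S A + tr2 S B"
  by (simp add: tr2_def algebra_simps sum.distrib)

lemma tr2_scale: "tr2 S (c *\<^sub>R A) = c * tr2 S A"
  by (simp add: tr2_def sum_distrib_left mult_ac)

lemma tr2_zero: "tr2 S 0 = 0" by (simp add: tr2_def)

lemma tr2_sum: "tr2 S (\<Sum>i\<in>I. A i) = (\<Sum>i\<in>I. tr2 S (A i))"
  by (induction I rule: infinite_finite_induct) (auto simp: tr2_add tr2_zero)

lemma tr2_outer: "tr2 S (outer u u) = u \<bullet> (S *v u)"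
  by (simp add: tr2_def outer_def inner_vec_def matrix_vector_mult_def sum_distrib_left mult_ac)

lemma tr2_Mof: "tr2 S (Mof I c u) = tr2 S (mat 1) + (\<Sum>i\<in>I. c i * (u i \<bullet> (S *v u i)))"
  by (simp add: Mof_def tr2_add tr2_sum tr2_scale tr2_outer)

lemma expansion:
  fixes d :: "nat \<Rightarrow> real^'n"
  assumes od: "orthon {1..N} d" and N: "N = CARD('n)"
  shows "x = (\<Sum>j\<in>{1..N}. (x \<bullet> d j) *\<^sub>R d j)"
proof -
  let ?D = "d ` {1..N}"
  have inj: "inj_on d {1..N}"
  proof
    fix i j assume "i \<in> {1..N}" "j \<in> {1..N}" "d i = d j"
    then show "i = j" using od unfolding orthon_def by (metis zero_neq_one)
  qed
  have card: "card ?D = N" using inj by (simp add: card_image)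
  have nz: "0 \<notin> ?D"
  proof
    assume "0 \<in> ?D"
    then obtain j where "j \<in> {1..N}" "d j = 0" by auto
    then show False using od unfolding orthon_def by (metis inner_zero_left zero_neq_one)
  qed
  have po: "pairwise orthogonal ?D"
    using od unfolding pairwise_def orthon_def orthogonal_def by auto
  have ind: "independent ?D" by (rule pairwise_orthogonal_independent[OF po nz])
  have sp: "UNIV \<subseteq> span ?D"
    by (rule card_ge_dim_independent[OF _ ind]) (use card N in auto)
  define y where "y = x - (\<Sum>j\<in>{1..N}. (x \<bullet> d j) *\<^sub>R d j)"
  have "y \<bullet> d l = 0" if l: "l \<in> {1..N}" for l
  proof -
    have "y \<bullet> d l = x \<bullet> d l - (\<Sum>j\<in>{1..N}. (x \<bullet> d j) * (d j \<bullet> d l))"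
      by (simp add: y_def inner_diff_left inner_sum_left)
    also have "(\<Sum>j\<in>{1..N}. (x \<bullet> d j) * (d j \<bullet> d l)) = (\<Sum>j\<in>{1..N}. if j = l then x \<bullet> d l else 0)"
      using od l unfolding orthon_def by (intro sum.cong) auto
    also have "\<dots> = x \<bullet> d l" using l by simp
    finally show ?thesis by simp
  qed
  then have "orthogonal y z" if "z \<in> ?D" for z using that unfolding orthogonal_def by auto
  then have "orthogonal y y" using orthogonal_to_span[of y ?D y] sp by auto
  then have "y = 0" by (simp add: orthogonal_self)
  then show ?thesis by (simp add: y_def)
qed

lemma bessel:
  fixes u :: "nat \<Rightarrow> real^'n"
  assumes "finite I" "orthon I u"
  shows "(\<Sum>i\<in>I. (u i \<bullet> x)^2) \<le> x \<bullet> x"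
proof -
  define y where "y = (\<Sum>i\<in>I. (u i \<bullet> x) *\<^sub>R u i)"
  have xy: "x \<bullet> y = (\<Sum>i\<in>I. (u i \<bullet> x)^2)"
    by (simp add: y_def inner_sum_right power2_eq_square inner_commute)
  have yy: "y \<bullet> y = (\<Sum>i\<in>I. (u i \<bullet> x)^2)"
  proof -
    have "y \<bullet> y = (\<Sum>i\<in>I. \<Sum>l\<in>I. (u i \<bullet> x) * (u l \<bullet> x) * (u i \<bullet> u l))"
      by (simp add: y_def inner_sum_right inner_sum_left sum_distrib_left mult_ac inner_commute)
    also have "\<dots> = (\<Sum>i\<in>I. \<Sum>l\<in>I. if l = i then (u i \<bullet> x)^2 else 0)"
      using assms(2) unfolding orthon_def
      by (intro sum.cong refl) (auto simp: power2_eq_square)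
    also have "\<dots> = (\<Sum>i\<in>I. (u i \<bullet> x)^2)" using assms(1) by simp
    finally show ?thesis .
  qed
  have "0 \<le> (x - y) \<bullet> (x - y)" by simp
  also have "\<dots> = x \<bullet> x - 2 * (x \<bullet> y) + y \<bullet> y"
    by (simp add: inner_diff_left inner_diff_right inner_commute)
  finally show ?thesis using xy yy by simp
qed

lemma tangent:
  assumes "0 < l" "0 < q"
  shows "ell l \<le> ell q + (1 / q - 1) * (l - q)"
proof -
  have "ln (l / q) \<le> l / q - 1" using assms by (intro ln_le_minus_one) simp
  then have "ln l - ln q \<le> l / q - 1" using assms by (simp add: ln_div)
  then show ?thesis using assms by (simp add: ell_def field_simps)
qed

lemma rearr:
  fixes a w :: "nat \<Rightarrow> real"
  assumes mono: "\<And>i j. i \<in> {1..N} \<Longrightarrow> j \<in> {1..N} \<Longrightarrow> i \<le> j \<Longrightarrow> a i \<le> a j"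
    and w01: "\<And>j. j \<in> {1..N} \<Longrightarrow> 0 \<le> w j \<and> w j \<le> 1"
    and ws: "(\<Sum>j\<in>{1..N}. w j) = real k" and k: "1 \<le> k" "k \<le> N"
  shows "(\<Sum>j\<in>{1..k}. a j) \<le> (\<Sum>j\<in>{1..N}. w j * a j)"
proof -
  have split: "\<And>f :: nat \<Rightarrow> real. (\<Sum>j\<in>{1..N}. f j) = (\<Sum>j\<in>{1..k}. f j) + (\<Sum>j\<in>{k+1..N}. f j)"
  proof -
    fix f :: "nat \<Rightarrow> real"
    have e: "{1..N} = {1..k} \<union> {k+1..N}" using k by auto
    show "(\<Sum>j\<in>{1..N}. f j) = (\<Sum>j\<in>{1..k}. f j) + (\<Sum>j\<in>{k+1..N}. f j)"
      unfolding e by (rule sum.union_disjoint) auto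
  qed
  have A: "(\<Sum>j\<in>{1..k}. (w j - 1) * a k) \<le> (\<Sum>j\<in>{1..k}. (w j - 1) * a j)"
  proof (intro sum_mono)
    fix j assume j: "j \<in> {1..k}"
    then have "a j \<le> a k" using k by (intro mono) auto
    moreover have "w j - 1 \<le> 0" using w01[of j] j k by auto
    ultimately show "(w j - 1) * a k \<le> (w j - 1) * a j" by (simp add: mult_left_mono_neg)
  qed
  have B: "(\<Sum>j\<in>{k+1..N}. w j * a k) \<le> (\<Sum>j\<in>{k+1..N}. w j * a j)"
  proof (intro sum_mono)
    fix j assume j: "j \<in> {k+1..N}"
    then have "a k \<le> a j" using k by (intro mono) auto
    moreover have "0 \<le> w j" using w01[of j] j k by auto
    ultimately show "w j * a k \<le> w j * a j" by (simp add: mult_left_mono)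
  qed
  have "(\<Sum>j\<in>{1..k}. (w j - 1) * a k) + (\<Sum>j\<in>{k+1..N}. w j * a k)
      = a k * ((\<Sum>j\<in>{1..N}. w j) - real k)"
  proof -
    have s1: "(\<Sum>j\<in>{1..k}. (w j - 1) * a k) = a k * (\<Sum>j\<in>{1..k}. w j) - a k * real k"
      by (simp add: sum_subtractf sum_distrib_left algebra_simps)
    have s2: "(\<Sum>j\<in>{k+1..N}. w j * a k) = a k * (\<Sum>j\<in>{k+1..N}. w j)"
      by (simp add: sum_distrib_left mult.commute)
    show ?thesis unfolding s1 s2 split[of w] by (simp add: algebra_simps)
  qed
  also have "\<dots> = 0" using ws by simp
  finally have "0 \<le> (\<Sum>j\<in>{1..k}. (w j - 1) * a j) + (\<Sum>j\<in>{k+1..N}. w j * a j)"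
    using A B by linarith
  also have "\<dots> = (\<Sum>j\<in>{1..N}. w j * a j) - (\<Sum>j\<in>{1..k}. a j)"
    unfolding split[of "\<lambda>j. w j * a j"] by (simp add: algebra_simps sum_subtractf)
  finally show ?thesis by simp
qed



lemma mv_sum: "(A::real^'n^'m) *v (\<Sum>i\<in>I. f i) = (\<Sum>i\<in>I. A *v f i)"
  by (induction I rule: infinite_finite_induct) (auto simp: matrix_vector_right_distrib)

lemma spectral_ineq:
  fixes S :: "real^'n^'n" and lam :: "nat \<Rightarrow> real" and d u :: "nat \<Rightarrow> real^'n"
  assumes pd: "\<And>x. x \<noteq> 0 \<Longrightarrow> 0 < x \<bullet> (S *v x)"
    and eig: "\<And>i. i \<in> {1..N} \<Longrightarrow> S *v d i = lam i *\<^sub>R d i"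
    and od: "orthon {1..N} d" and N: "N = CARD('n)"
    and ranked: "\<And>i j. i \<in> {1..N} \<Longrightarrow> j \<in> {1..N} \<Longrightarrow> i \<le> j \<Longrightarrow> ell (lam i) \<le> ell (lam j)"
    and ou: "orthon {1..k} u" and k: "1 \<le> k" "k \<le> N"
  shows "(\<Sum>i\<in>{1..k}. ell (lam i)) \<le> (\<Sum>i\<in>{1..k}. ell (u i \<bullet> (S *v u i)))"
proof -
  have dd: "d j \<bullet> d j = 1" if "j \<in> {1..N}" for j using od that unfolding orthon_def by auto
  have uu: "u i \<bullet> u i = 1" if "i \<in> {1..k}" for i using ou that unfolding orthon_def by auto
  have lam_pos: "0 < lam j" if j: "j \<in> {1..N}" for j
  proof -
    have "d j \<noteq> 0" using dd[OF j] by auto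
    then have "0 < d j \<bullet> (S *v d j)" by (rule pd)
    also have "\<dots> = lam j" using eig[OF j] dd[OF j] by simp
    finally show ?thesis .
  qed
  define c where "c i j = (u i \<bullet> d j)^2" for i j
  have exp: "x = (\<Sum>j\<in>{1..N}. (x \<bullet> d j) *\<^sub>R d j)" for x by (rule expansion[OF od N])
  have row: "(\<Sum>j\<in>{1..N}. c i j) = 1" if i: "i \<in> {1..k}" for i
  proof -
    have "u i \<bullet> u i = u i \<bullet> (\<Sum>j\<in>{1..N}. (u i \<bullet> d j) *\<^sub>R d j)" using exp[of "u i"] by simp
    also have "\<dots> = (\<Sum>j\<in>{1..N}. c i j)"
      by (simp add: inner_sum_right c_def power2_eq_square)
    finally show ?thesis using uu[OF i] by simp
  qed
  define q where "q i = u i \<bullet> (S *v u i)" for i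
  have qexp: "q i = (\<Sum>j\<in>{1..N}. c i j * lam j)" for i
  proof -
    have "S *v u i = S *v (\<Sum>j\<in>{1..N}. (u i \<bullet> d j) *\<^sub>R d j)" using exp[of "u i"] by simp
    also have "\<dots> = (\<Sum>j\<in>{1..N}. ((u i \<bullet> d j) * lam j) *\<^sub>R d j)"
      by (simp add: mv_sum matrix_vector_mult_scaleR) (intro sum.cong refl, simp add: eig)
    finally have "q i = u i \<bullet> (\<Sum>j\<in>{1..N}. ((u i \<bullet> d j) * lam j) *\<^sub>R d j)" by (simp add: q_def)
    also have "\<dots> = (\<Sum>j\<in>{1..N}. c i j * lam j)"
      by (simp add: inner_sum_right c_def power2_eq_square mult_ac)
    finally show ?thesis .
  qed
  have q_pos: "0 < q i" if i: "i \<in> {1..k}" for i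
  proof -
    have "u i \<noteq> 0" using uu[OF i] by auto
    then show ?thesis using pd[of "u i"] by (simp add: q_def)
  qed
  have c_nn: "0 \<le> c i j" for i j by (simp add: c_def)
  have jensen: "(\<Sum>j\<in>{1..N}. c i j * ell (lam j)) \<le> ell (q i)" if i: "i \<in> {1..k}" for i
  proof -
    have "(\<Sum>j\<in>{1..N}. c i j * ell (lam j))
        \<le> (\<Sum>j\<in>{1..N}. c i j * (ell (q i) + (1 / q i - 1) * (lam j - q i)))"
      by (intro sum_mono mult_left_mono tangent lam_pos q_pos[OF i] c_nn) auto
    also have "\<dots> = ell (q i) * (\<Sum>j\<in>{1..N}. c i j)
        + (1 / q i - 1) * ((\<Sum>j\<in>{1..N}. c i j * lam j) - q i * (\<Sum>j\<in>{1..N}. c i j))"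
      by (simp add: algebra_simps sum.distrib sum_subtractf sum_distrib_left)
    also have "\<dots> = ell (q i)" using row[OF i] qexp[of i] by simp
    finally show ?thesis .
  qed
  define w where "w j = (\<Sum>i\<in>{1..k}. c i j)" for j
  have w01: "0 \<le> w j \<and> w j \<le> 1" if j: "j \<in> {1..N}" for j
  proof
    show "0 \<le> w j" unfolding w_def by (intro sum_nonneg c_nn)
    have "w j = (\<Sum>i\<in>{1..k}. (u i \<bullet> d j)^2)" by (simp add: w_def c_def)
    also have "\<dots> \<le> d j \<bullet> d j" by (rule bessel[OF _ ou]) simp
    finally show "w j \<le> 1" using dd[OF j] by simp
  qed
  have ws: "(\<Sum>j\<in>{1..N}. w j) = real k"
  proof -
    have "(\<Sum>j\<in>{1..N}. w j) = (\<Sum>i\<in>{1..k}. \<Sum>j\<in>{1..N}. c i j)"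
      unfolding w_def by (rule sum.swap)
    also have "\<dots> = (\<Sum>i\<in>{1..k}. 1)" by (intro sum.cong refl row) 
    finally show ?thesis by simp
  qed
  have "(\<Sum>i\<in>{1..k}. ell (lam i)) \<le> (\<Sum>j\<in>{1..N}. w j * ell (lam j))"
    by (rule rearr[where N=N, OF ranked w01 ws k]) auto
  also have "\<dots> = (\<Sum>i\<in>{1..k}. \<Sum>j\<in>{1..N}. c i j * ell (lam j))"
    unfolding w_def by (simp add: sum_distrib_right) (rule sum.swap)
  also have "\<dots> \<le> (\<Sum>i\<in>{1..k}. ell (q i))"
    by (intro sum_mono jensen)
  finally show ?thesis by (simp add: q_def)
qed



lemma pair_int:
  fixes gs :: "real^'n \<Rightarrow> real" and m :: "real^'n"
  assumes ig: "integrable lborel gs"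
    and im: "\<And>i. integrable lborel (\<lambda>x. gs x * x $ i)"
    and ic: "\<And>i j. integrable lborel (\<lambda>x. gs x * (x $ i) * (x $ j))"
  shows "integrable lborel (\<lambda>x. gs x * ((x - m) $ a) * ((x - m) $ b))"
proof -
  have e: "(\<lambda>x. gs x * ((x - m) $ a) * ((x - m) $ b)) =
    (\<lambda>x. gs x * (x $ a) * (x $ b) - m $ b * (gs x * x $ a) - m $ a * (gs x * x $ b) + (m $ a * m $ b) * gs x)"
    by (rule ext) (simp add: algebra_simps)
  show ?thesis unfolding e
    by (intro Bochner_Integration.integrable_add Bochner_Integration.integrable_diff integrable_mult_right ig im ic)
qed

lemma quad_int:
  fixes gs :: "real^'n \<Rightarrow> real" and m :: "real^'n" and A :: "real^'n^'n"
  assumes ig: "integrable lborel gs"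
    and im: "\<And>i. integrable lborel (\<lambda>x. gs x * x $ i)"
    and ic: "\<And>i j. integrable lborel (\<lambda>x. gs x * (x $ i) * (x $ j))"
  shows "integrable lborel (\<lambda>x. gs x * ((x - m) \<bullet> (A *v (x - m))))"
    "(\<integral>x. gs x * ((x - m) \<bullet> (A *v (x - m))) \<partial>lborel) =
      tr2 (\<chi> a b. \<integral>x. gs x * ((x - m) $ a) * ((x - m) $ b) \<partial>lborel) A"
proof -
  have e: "(\<lambda>x. gs x * ((x - m) \<bullet> (A *v (x - m)))) =
     (\<lambda>x. \<Sum>a\<in>UNIV. \<Sum>b\<in>UNIV. A $ a $ b * (gs x * ((x - m) $ a) * ((x - m) $ b)))"
    by (rule ext) (simp add: inner_vec_def matrix_vector_mult_def sum_distrib_left mult_ac)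
  show "integrable lborel (\<lambda>x. gs x * ((x - m) \<bullet> (A *v (x - m))))" unfolding e
    by (intro Bochner_Integration.integrable_sum integrable_mult_right pair_int[OF ig im ic])
  show "(\<integral>x. gs x * ((x - m) \<bullet> (A *v (x - m))) \<partial>lborel) =
      tr2 (\<chi> a b. \<integral>x. gs x * ((x - m) $ a) * ((x - m) $ b) \<partial>lborel) A"
  proof -
    define F where "F a b x = A $ a $ b * (gs x * ((x - m) $ a) * ((x - m) $ b))" for a b x
    have pi: "integrable lborel (F a b)" for a b
      unfolding F_def by (intro integrable_mult_right pair_int[OF ig im ic])
    have "(\<integral>x. (\<Sum>a\<in>UNIV. \<Sum>b\<in>UNIV. F a b x) \<partial>lborel) = (\<Sum>a\<in>UNIV. \<integral>x. (\<Sum>b\<in>UNIV. F a b x) \<partial>lborel)"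
      by (rule Bochner_Integration.integral_sum) (intro Bochner_Integration.integrable_sum pi)
    also have "\<dots> = (\<Sum>a\<in>UNIV. \<Sum>b\<in>UNIV. \<integral>x. F a b x \<partial>lborel)"
      by (intro sum.cong refl Bochner_Integration.integral_sum pi)
    also have "\<dots> = tr2 (\<chi> a b. \<integral>x. gs x * ((x - m) $ a) * ((x - m) $ b) \<partial>lborel) A"
      unfolding tr2_def F_def by simp
    finally show ?thesis unfolding e F_def .
  qed
qed

lemma KL_formula:
  fixes gs :: "real^'n \<Rightarrow> real" and m :: "real^'n" and S :: "real^'n^'n"
  assumes nn: "\<And>x. 0 \<le> gs x"
    and ig: "integrable lborel gs"
    and im: "\<And>i. integrable lborel (\<lambda>x. gs x * x $ i)"
    and ic: "\<And>i j. integrable lborel (\<lambda>x. gs x * (x $ i) * (x $ j))"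
    and i1: "(\<integral>x. gs x \<partial>lborel) = 1"
    and dp: "0 < det S"
  shows "KL gs (gauss_dens m S) =
    (if integrable lborel (\<lambda>x. gs x * ln (gs x))
     then ereal ((\<integral>x. gs x * ln (gs x) \<partial>lborel) + (CARD('n) * ln (2 * pi) + ln (det S)) / 2
        + tr2 (\<chi> a b. \<integral>x. gs x * ((x - m) $ a) * ((x - m) $ b) \<partial>lborel) (matrix_inv S) / 2)
     else \<infinity>)"
proof -
  define Q where "Q x = (x - m) \<bullet> (matrix_inv S *v (x - m))" for x
  define K where "K = (CARD('n) * ln (2 * pi) + ln (det S)) / 2"
  define G where "G x = gs x * ln (gs x)" for x
  define R where "R x = gs x * Q x / 2 + K * gs x" for x
  have pos: "0 < (2 * pi) ^ CARD('n) * det S" using dp by simp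
  have lnh: "ln (gauss_dens m S x) = - (1/2) * Q x - K" for x
  proof -
    have "ln (gauss_dens m S x) = ln (exp (- (1/2) * Q x)) - ln (sqrt ((2 * pi) ^ CARD('n) * det S))"
      unfolding gauss_dens_def Q_def using pos dp by (simp add: ln_div)
    also have "ln (sqrt ((2 * pi) ^ CARD('n) * det S)) = K"
      using pos dp by (simp add: ln_sqrt ln_mult ln_realpow K_def algebra_simps)
    finally show ?thesis by simp
  qed
  have hpos: "0 < gauss_dens m S x" for x
    unfolding gauss_dens_def using pos by simp
  have pw: "gs x * ln (gs x / gauss_dens m S x) = G x + R x" for x
  proof (cases "gs x = 0")
    case True then show ?thesis by (simp add: G_def R_def)
  next
    case False
    then have "0 < gs x" using nn[of x] by simp
    then have "ln (gs x / gauss_dens m S x) = ln (gs x) + (1/2) * Q x + K"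
      using hpos[of x] by (simp add: ln_div lnh)
    then show ?thesis by (simp add: G_def R_def algebra_simps)
  qed
  have iR: "integrable lborel R"
    unfolding R_def Q_def
    by (intro Bochner_Integration.integrable_add integrable_divide integrable_mult_right quad_int(1)[OF ig im ic] ig)
  have intR: "(\<integral>x. R x \<partial>lborel) = tr2 (\<chi> a b. \<integral>x. gs x * ((x - m) $ a) * ((x - m) $ b) \<partial>lborel) (matrix_inv S) / 2 + K"
    unfolding R_def Q_def
    using quad_int[OF ig im ic, of m "matrix_inv S"] i1
    by (simp add: integrable_divide integrable_mult_right quad_int(1)[OF ig im ic] ig)
  have eqf: "(\<lambda>x. gs x * ln (gs x / gauss_dens m S x)) = (\<lambda>x. G x + R x)" using pw by auto
  have iff: "integrable lborel (\<lambda>x. G x + R x) \<longleftrightarrow> integrable lborel G"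
  proof
    assume "integrable lborel (\<lambda>x. G x + R x)"
    then have "integrable lborel (\<lambda>x. (G x + R x) - R x)" using iR by (intro Bochner_Integration.integrable_diff)
    then show "integrable lborel G" by simp
  next
    assume "integrable lborel G"
    then show "integrable lborel (\<lambda>x. G x + R x)" using iR by (intro Bochner_Integration.integrable_add)
  qed
  show ?thesis
  proof (cases "integrable lborel G")
    case True
    then have "(\<integral>x. G x + R x \<partial>lborel) = (\<integral>x. G x \<partial>lborel) + (\<integral>x. R x \<partial>lborel)"
      using iR by (rule Bochner_Integration.integral_add)
    then have "KL gs (gauss_dens m S) = ereal ((\<integral>x. G x \<partial>lborel) + (\<integral>x. R x \<partial>lborel))"
      unfolding KL_def eqf using True iff by simp
    moreover have "G = (\<lambda>x. gs x * ln (gs x))" by (simp add: G_def fun_eq_iff)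
    ultimately show ?thesis unfolding intR K_def using True by (simp add: add.assoc)
  next
    case False
    moreover have "G = (\<lambda>x. gs x * ln (gs x))" by (simp add: G_def fun_eq_iff)
    ultimately show ?thesis unfolding KL_def eqf using iff by simp
  qed
qed



lemma Lnk_form:
  fixes S :: "real^'n^'n"
  assumes "S \<in> Lnk k"
  obtains \<alpha> u where "\<forall>i\<in>{1..k}. \<alpha> i > 0" "orthon {1..k} u" "S = Mof {1..k} (\<lambda>i. \<alpha> i - 1) u"
proof -
  obtain \<alpha> dd where S: "S = mat 1 + (\<Sum>i\<in>{1..k}. ((\<alpha> i - 1) / (norm (dd i))\<^sup>2) *\<^sub>R outer (dd i) (dd i))"
    and c1: "\<forall>i\<in>{1..k}. \<alpha> i > 0 \<and> dd i \<noteq> (0::real^'n)"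
    and c2: "\<forall>i\<in>{1..k}. \<forall>j\<in>{1..k}. i \<noteq> j \<longrightarrow> dd i \<bullet> dd j = 0"
    using assms unfolding Lnk_def by blast
  define u where "u i = (1 / norm (dd i)) *\<^sub>R dd i" for i
  have ou: "outer (u i) (u i) = (1 / (norm (dd i))\<^sup>2) *\<^sub>R outer (dd i) (dd i)" for i
    by (simp add: u_def outer_def vec_eq_iff power2_eq_square)
  have "S = Mof {1..k} (\<lambda>i. \<alpha> i - 1) u"
    unfolding S Mof_def ou by (simp add: divide_inverse)
  moreover have "orthon {1..k} u"
    unfolding orthon_def
  proof (intro ballI)
    fix i j assume i: "i \<in> {1..k}" and j: "j \<in> {1..k}"
    have "u i \<bullet> u j = (dd i \<bullet> dd j) / (norm (dd i) * norm (dd j))"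
      by (simp add: u_def)
    also have "\<dots> = (if i = j then 1 else 0)"
    proof (cases "i = j")
      case True
      then show ?thesis using c1 i by (simp add: dot_square_norm power2_eq_square)
    next
      case False
      then show ?thesis using c2 i j by simp
    qed
    finally show "u i \<bullet> u j = (if i = j then 1 else 0)" .
  qed
  moreover have "\<forall>i\<in>{1..k}. \<alpha> i > 0" using c1 by simp
  ultimately show ?thesis using that by blast
qed

lemma ell_bound:
  assumes "0 < a" "0 < q"
  shows "ell q \<le> ln a + (1 / a - 1) * q"
proof -
  have "ln (q / a) \<le> q / a - 1" using assms by (intro ln_le_minus_one) simp
  then have "ln q - ln a \<le> q / a - 1" using assms by (simp add: ln_div)
  then show ?thesis using assms by (simp add: ell_def field_simps)
qed

theorem theorem1:
  fixes \<phi> :: "real^'n \<Rightarrow> real"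
    and lam :: "nat \<Rightarrow> real" and d :: "nat \<Rightarrow> real^'n"
    and f gs :: "real^'n \<Rightarrow> real" and E :: real
    and mstar :: "real^'n" and Sstar :: "real^'n^'n"
  defines "f \<equiv> gauss_dens 0 (mat 1)"
    and "E \<equiv> \<integral>x. \<phi> x * f x \<partial>lborel"
    and "gs \<equiv> (\<lambda>x. \<phi> x * f x / E)"
    and "mstar \<equiv> \<integral>x. gs x *\<^sub>R x \<partial>lborel"
    and "Sstar \<equiv> (\<chi> i j. \<integral>x. gs x * ((x - mstar) $ i) * ((x - mstar) $ j) \<partial>lborel)"
  assumes phi_meas: "\<phi> \<in> borel_measurable lborel"
    and phi_nonneg: "\<And>x. \<phi> x \<ge> 0"
    and E_int: "integrable lborel (\<lambda>x. \<phi> x * f x)"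
    and E_pos: "E > 0"
    and mean_ex: "\<And>i. integrable lborel (\<lambda>x. gs x * x $ i)"
    and cov_ex: "\<And>i j. integrable lborel (\<lambda>x. gs x * (x $ i) * (x $ j))"
    and Sstar_pd: "sym_pos_def Sstar"
    and eig: "\<And>i. i \<in> {1..CARD('n)} \<Longrightarrow> Sstar *v d i = lam i *\<^sub>R d i"
    and orthonormal: "\<And>i j. i \<in> {1..CARD('n)} \<Longrightarrow> j \<in> {1..CARD('n)} \<Longrightarrow>
                         d i \<bullet> d j = (if i = j then 1 else 0)"
    and ranked: "\<And>i j. i \<in> {1..CARD('n)} \<Longrightarrow> j \<in> {1..CARD('n)} \<Longrightarrow> i \<le> j \<Longrightarrow>
                    ell (lam i) \<le> ell (lam j)"
    and k: "1 \<le> k" "k \<le> CARD('n)"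
  shows "(mat 1 + (\<Sum>i\<in>{1..k}. (lam i - 1) *\<^sub>R outer (d i) (d i))) \<in> Lnk k
         \<and> (\<forall>S\<in>Lnk k. KL gs (gauss_dens mstar (mat 1 + (\<Sum>i\<in>{1..k}. (lam i - 1) *\<^sub>R outer (d i) (d i))))
                        \<le> KL gs (gauss_dens mstar S))"
proof -
  let ?N = "CARD('n)"
  have pd: "\<And>x. x \<noteq> 0 \<Longrightarrow> 0 < x \<bullet> (Sstar *v x)"
    using Sstar_pd unfolding sym_pos_def_def by blast
  have od: "orthon {1..?N} d" unfolding orthon_def using orthonormal by blast
  have odk: "orthon {1..k} d" by (rule orthon_subset[OF od]) (use k in auto)
  have lam_pos: "0 < lam i" if i: "i \<in> {1..?N}" for i
  proof -
    have dd: "d i \<bullet> d i = 1" using orthonormal[OF i i] by simp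
    then have "d i \<noteq> 0" by auto
    then have "0 < d i \<bullet> (Sstar *v d i)" by (rule pd)
    also have "\<dots> = lam i" using eig[OF i] dd by simp
    finally show ?thesis .
  qed
  have lamk: "\<forall>i\<in>{1..k}. lam i > 0" using lam_pos k by auto
  have qd: "d i \<bullet> (Sstar *v d i) = lam i" if i: "i \<in> {1..k}" for i
    using eig[of i] orthonormal[of i i] i k by simp
  have fnn: "0 \<le> f x" for x unfolding f_def gauss_dens_def by simp
  have gs_nn: "0 \<le> gs x" for x unfolding gs_def using fnn phi_nonneg E_pos by simp
  have ig: "integrable lborel gs" unfolding gs_def by (rule integrable_divide[OF E_int])
  have i1: "(\<integral>x. gs x \<partial>lborel) = 1" unfolding gs_def
    using E_pos by (simp add: E_def[symmetric])
  define IG where "IG = (\<integral>x. gs x * ln (gs x) \<partial>lborel)"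
  define F where "F T = ln (det T) + tr2 Sstar (matrix_inv T)" for T :: "real^'n^'n"
  have KLf: "KL gs (gauss_dens mstar T) =
     (if integrable lborel (\<lambda>x. gs x * ln (gs x)) then ereal (IG + (?N * ln (2 * pi)) / 2 + F T / 2) else \<infinity>)"
    if "0 < det T" for T
    using KL_formula[OF gs_nn ig mean_ex cov_ex i1 that, of mstar]
    unfolding Sstar_def[symmetric] IG_def F_def by (simp add: add_divide_distrib algebra_simps)
  let ?C = "mat 1 + (\<Sum>i\<in>{1..k}. (lam i - 1) *\<^sub>R outer (d i) (d i))"
  have C: "?C = Mof {1..k} (\<lambda>i. lam i - 1) d" by (simp add: Mof_def)
  have detC: "det ?C = (\<Prod>i\<in>{1..k}. lam i)" unfolding C det_Mof[OF finite_atLeastAtMost odk] by simp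
  have detCp: "0 < det ?C" unfolding detC using lamk by (intro prod_pos) auto
  have lnC: "ln (\<Prod>i\<in>{1..k}. lam i) = (\<Sum>i\<in>{1..k}. ln (lam i))"
    using lamk by (intro ln_prod) (simp, metis less_irrefl)
  have FC: "F ?C = tr2 Sstar (mat 1) + (\<Sum>i\<in>{1..k}. ell (lam i))"
  proof -
    have "F ?C = (\<Sum>i\<in>{1..k}. ln (lam i)) + (tr2 Sstar (mat 1) + (\<Sum>i\<in>{1..k}. (1 / lam i - 1) * lam i))"
      unfolding F_def detC unfolding C Mof_inv(2)[OF finite_atLeastAtMost odk lamk] tr2_Mof
      using lamk lnC by (simp add: qd)
    also have "\<dots> = tr2 Sstar (mat 1) + (\<Sum>i\<in>{1..k}. ell (lam i))"
    proof -
      have "ell (lam i) = ln (lam i) + (1 / lam i - 1) * lam i" if "i \<in> {1..k}" for i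
      proof -
        have "0 < lam i" using lamk that by blast
        then show ?thesis by (simp add: ell_def field_simps)
      qed
      then have "(\<Sum>i\<in>{1..k}. ell (lam i)) = (\<Sum>i\<in>{1..k}. ln (lam i)) + (\<Sum>i\<in>{1..k}. (1 / lam i - 1) * lam i)"
        by (simp add: sum.distrib[symmetric])
      then show ?thesis by simp
    qed
    finally show ?thesis .
  qed
  have mem: "?C \<in> Lnk k"
  proof -
    have n1: "norm (d i) = 1" if "i \<in> {1..k}" for i
      using orthonormal[of i i] that k by (simp add: norm_eq_sqrt_inner)
    have "?C = mat 1 + (\<Sum>i\<in>{1..k}. ((lam i - 1) / (norm (d i))\<^sup>2) *\<^sub>R outer (d i) (d i))"
      using n1 by (intro arg_cong2[where f="(+)"] refl sum.cong) auto
    moreover have "\<forall>i\<in>{1..k}. lam i > 0 \<and> d i \<noteq> 0"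
    proof
      fix i assume i: "i \<in> {1..k}"
      have "d i \<bullet> d i = 1" using odk i unfolding orthon_def by auto
      then show "lam i > 0 \<and> d i \<noteq> 0" using lamk i by auto
    qed
    moreover have "\<forall>i\<in>{1..k}. \<forall>j\<in>{1..k}. i \<noteq> j \<longrightarrow> d i \<bullet> d j = 0"
      using odk unfolding orthon_def by auto
    ultimately show ?thesis unfolding Lnk_def by blast
  qed
  have opt: "KL gs (gauss_dens mstar ?C) \<le> KL gs (gauss_dens mstar S)" if S: "S \<in> Lnk k" for S
  proof -
    obtain \<alpha> u where ap: "\<forall>i\<in>{1..k}. \<alpha> i > 0" and ou: "orthon {1..k} u"
      and Sf: "S = Mof {1..k} (\<lambda>i. \<alpha> i - 1) u"
      using Lnk_form[OF S] by blast
    have detS: "det S = (\<Prod>i\<in>{1..k}. \<alpha> i)" unfolding Sf det_Mof[OF finite_atLeastAtMost ou] by simp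
    have detSp: "0 < det S" unfolding detS using ap by (intro prod_pos) auto
    have qp: "0 < u i \<bullet> (Sstar *v u i)" if i: "i \<in> {1..k}" for i
    proof -
      have "u i \<bullet> u i = 1" using ou i unfolding orthon_def by auto
      then have "u i \<noteq> 0" by auto
      then show ?thesis by (rule pd)
    qed
    have lnS: "ln (\<Prod>i\<in>{1..k}. \<alpha> i) = (\<Sum>i\<in>{1..k}. ln (\<alpha> i))"
      using ap by (intro ln_prod) (simp, metis less_irrefl)
    have FS: "F S = (\<Sum>i\<in>{1..k}. ln (\<alpha> i)) + (tr2 Sstar (mat 1) + (\<Sum>i\<in>{1..k}. (1 / \<alpha> i - 1) * (u i \<bullet> (Sstar *v u i))))"
      unfolding F_def detS unfolding Sf Mof_inv(2)[OF finite_atLeastAtMost ou ap] tr2_Mof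
      using ap lnS by simp
    have "(\<Sum>i\<in>{1..k}. ell (lam i)) \<le> (\<Sum>i\<in>{1..k}. ell (u i \<bullet> (Sstar *v u i)))"
      by (rule spectral_ineq[OF pd eig od refl ranked ou k]) auto
    also have "\<dots> \<le> (\<Sum>i\<in>{1..k}. ln (\<alpha> i) + (1 / \<alpha> i - 1) * (u i \<bullet> (Sstar *v u i)))"
      by (intro sum_mono ell_bound) (use ap qp in auto)
    finally have "F ?C \<le> F S" unfolding FC FS by (simp add: sum.distrib)
    then show ?thesis unfolding KLf[OF detCp] KLf[OF detSp] by simp
  qed
  show ?thesis using mem opt by blast
qed

end
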